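(* Let $N\ge2$ and $1>\mu_1>\mu_2>\dots>\mu_N>0$. Consider the partial monitoring game with $M=2^N$ outcomes and $A=2$ symbols where $L=H\in\mathbb{R}^{N\times2^N}$ with $l_{i,j}=h_{i,j}=\mathbb{1}[(j-1\bmod 2^i)<2^{i-1}]+1$, and opponent strategy $p^*\in\mathcal{P}_{2^N}$ with $p^*_j=\prod_{i\in[N]}(\mu_i+(1-2\mu_i)\mathbb{1}[(j-1\bmod2^i)<2^{i-1}])$ (the $N$-armed Bernoulli bandit with means $\mu_i$ represented as partial monitoring). Then: (1) the set $\mathcal{R}^*_1(p^*,\{S_ip^*,0\})$ is a singleton; (2) with $\mathcal{S}_\delta=\{q\in\mathcal{P}_M:D(S_1p^*\Vert S_1q)\le\delta\}$, $\mathrm{cl}(\mathrm{int}(\mathcal{C}_1^c)\cap\mathcal{S}_\delta)=\mathrm{cl}(\mathrm{cl}(\mathcal{C}_1^c)\cap\mathcal{S}_\delta)$ for all $\delta\ge0$ in a neighborhood of $0$; and (3) $C_1(p^*,\{S_ip^*\})=\sum_{i\ne1}\Delta_i/d(\mu_i\Vert\mu_1)$, where $\Delta_i=(L_i-L_1)^\top p^*$ and $d(p\Vert q)=p\log(p/q)+(1-p)\log((1-p)/(1-q))$.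
   Context: $\mathcal{P}_M$ is the set of probability distributions on $[M]$; $L_i$ is the $i$-th row of $L$. Signal matrices $S_i\in\{0,1\}^{A\times M}$ with $(S_i)_{k,j}=1$ iff $h_{i,j}=k$ (so $(S_ip^* )_1=\mu_i$). Cells $\mathcal{C}_j=\{q\in\mathcal{P}_M:\forall i\ne j,(L_j-L_i)^\top q\le0\}$, $\mathcal{C}_j^c=\mathcal{P}_M\setminus\mathcal{C}_j$; $\mathrm{cl},\mathrm{int}$ denote closure and interior in $\mathcal{P}_M$. $D$ is the KL divergence of discrete distributions ($0\log(0/0)=0$), $(x)_+=\max(x,0)$. For distributions $p_i$ on $[A]$ and $\delta_i\ge0$: $\mathcal{R}_j(\{p_i,\delta_i\})=\{\{r_i\}_{i\ne j}\in[0,\infty)^{N-1}:\inf_{q\in\mathrm{cl}(\mathcal{C}_j^c):D(p_j\Vert S_jq)\le\delta_j}\sum_{i\ne j}r_i(D(p_i\Vert S_iq)-\delta_i)_+\ge1\}$, $C_j(p,\{p_i,\delta_i\})=\inf_{\{r_i\}\in\mathcal{R}_j(\{p_i,\delta_i\})}\sum_{i\ne j}r_i(L_i-L_j)^\top p$, $C_j(p,\{p_i\})=C_j(p,\{p_i,0\})$, and $\mathcal{R}^*_j(p,\{p_i,\delta_i\})$ is the set of minimizers. *)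

theory Defs
  imports "HOL-Analysis.Analysis"
begin

text \<open>Outcomes are indexed by 1..M, actions by 1..N, symbols by 1..A. The topology on the probsimplex is the subspace topology of the
  product topology on nat => real (= the Euclidean topology on the finitely many
  coordinates 1..M).\<close>

definition probsimplex :: "nat \<Rightarrow> (nat \<Rightarrow> real) set" where
  "probsimplex M = {q. (\<forall>j. 0 \<le> q j) \<and> (\<forall>j. j \<notin> {1..M} \<longrightarrow> q j = 0) \<and> (\<Sum>j=1..M. q j) = 1}"

definition clP :: "nat \<Rightarrow> (nat \<Rightarrow> real) set \<Rightarrow> (nat \<Rightarrow> real) set" where
  "clP M X = (top_of_set (probsimplex M)) closure_of X"

definition intP :: "nat \<Rightarrow> (nat \<Rightarrow> real) set \<Rightarrow> (nat \<Rightarrow> real) set" where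
  "intP M X = (top_of_set (probsimplex M)) interior_of X"

definition sigvec :: "nat \<Rightarrow> (nat \<Rightarrow> nat \<Rightarrow> nat) \<Rightarrow> nat \<Rightarrow> (nat \<Rightarrow> real) \<Rightarrow> (nat \<Rightarrow> real)" where
  "sigvec M H i q = (\<lambda>k. \<Sum>j\<in>{j\<in>{1..M}. H i j = k}. q j)"

definition KL :: "nat \<Rightarrow> (nat \<Rightarrow> real) \<Rightarrow> (nat \<Rightarrow> real) \<Rightarrow> ereal" where
  "KL A p q = (\<Sum>k=1..A. (if p k = 0 then 0 else if q k = 0 then \<infinity>
                            else ereal (p k * ln (p k / q k))))"

definition lossdiff :: "nat \<Rightarrow> (nat \<Rightarrow> nat \<Rightarrow> real) \<Rightarrow> nat \<Rightarrow> nat \<Rightarrow> (nat \<Rightarrow> real) \<Rightarrow> real" where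
  "lossdiff M L i j p = (\<Sum>k=1..M. (L i k - L j k) * p k)"

definition cell :: "nat \<Rightarrow> nat \<Rightarrow> (nat \<Rightarrow> nat \<Rightarrow> real) \<Rightarrow> nat \<Rightarrow> (nat \<Rightarrow> real) set" where
  "cell N M L j = {q \<in> probsimplex M. \<forall>i\<in>{1..N}. i \<noteq> j \<longrightarrow> lossdiff M L j i q \<le> 0}"

definition cellc :: "nat \<Rightarrow> nat \<Rightarrow> (nat \<Rightarrow> nat \<Rightarrow> real) \<Rightarrow> nat \<Rightarrow> (nat \<Rightarrow> real) set" where
  "cellc N M L j = probsimplex M - cell N M L j"

definition Rset :: "nat \<Rightarrow> nat \<Rightarrow> nat \<Rightarrow> (nat \<Rightarrow> nat \<Rightarrow> real) \<Rightarrow> (nat \<Rightarrow> nat \<Rightarrow> nat) \<Rightarrow> nat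
    \<Rightarrow> (nat \<Rightarrow> nat \<Rightarrow> real) \<Rightarrow> (nat \<Rightarrow> real) \<Rightarrow> (nat \<Rightarrow> real) set" where
  "Rset N M A L H j P \<delta> =
     {r. (\<forall>i. 0 \<le> r i) \<and> (\<forall>i. i \<notin> {1..N} - {j} \<longrightarrow> r i = 0) \<and>
         (INF q \<in> {q \<in> clP M (cellc N M L j). KL A (P j) (sigvec M H j q) \<le> ereal (\<delta> j)}.
             (\<Sum>i\<in>{1..N} - {j}. ereal (r i) * max (KL A (P i) (sigvec M H i q) - ereal (\<delta> i)) 0))
           \<ge> 1}"

definition Cval :: "nat \<Rightarrow> nat \<Rightarrow> nat \<Rightarrow> (nat \<Rightarrow> nat \<Rightarrow> real) \<Rightarrow> (nat \<Rightarrow> nat \<Rightarrow> nat) \<Rightarrow> nat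
    \<Rightarrow> (nat \<Rightarrow> real) \<Rightarrow> (nat \<Rightarrow> nat \<Rightarrow> real) \<Rightarrow> (nat \<Rightarrow> real) \<Rightarrow> ereal" where
  "Cval N M A L H j p P \<delta> =
     (INF r \<in> Rset N M A L H j P \<delta>. ereal (\<Sum>i\<in>{1..N} - {j}. r i * lossdiff M L i j p))"

definition Rstar :: "nat \<Rightarrow> nat \<Rightarrow> nat \<Rightarrow> (nat \<Rightarrow> nat \<Rightarrow> real) \<Rightarrow> (nat \<Rightarrow> nat \<Rightarrow> nat) \<Rightarrow> nat
    \<Rightarrow> (nat \<Rightarrow> real) \<Rightarrow> (nat \<Rightarrow> nat \<Rightarrow> real) \<Rightarrow> (nat \<Rightarrow> real) \<Rightarrow> (nat \<Rightarrow> real) set" where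
  "Rstar N M A L H j p P \<delta> =
     {r \<in> Rset N M A L H j P \<delta>.
        ereal (\<Sum>i\<in>{1..N} - {j}. r i * lossdiff M L i j p) = Cval N M A L H j p P \<delta>}"

definition bitind :: "nat \<Rightarrow> nat \<Rightarrow> bool" where
  "bitind i j \<longleftrightarrow> (j - 1) mod 2 ^ i < 2 ^ (i - 1)"

definition bandL :: "nat \<Rightarrow> nat \<Rightarrow> real" where
  "bandL i j = (if bitind i j then 1 else 0) + 1"

definition bandH :: "nat \<Rightarrow> nat \<Rightarrow> nat" where
  "bandH i j = (if bitind i j then 1 else 0) + 1"

definition bandp :: "nat \<Rightarrow> (nat \<Rightarrow> real) \<Rightarrow> nat \<Rightarrow> real" where
  "bandp N \<mu> j = (if j \<in> {1..2 ^ N}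
      then (\<Prod>i\<in>{1..N}. \<mu> i + (1 - 2 * \<mu> i) * (if bitind i j then 1 else 0)) else 0)"

definition bern_kl :: "real \<Rightarrow> real \<Rightarrow> real" where
  "bern_kl p q = p * ln (p / q) + (1 - p) * ln ((1 - p) / (1 - q))"

end

theory Submission
  imports Defs
begin

definition bb :: "nat \<Rightarrow> nat \<Rightarrow> bool" where "bb k n \<longleftrightarrow> n mod 2^k < 2^(k-1)"

lemma bb_shift:
  assumes "k \<in> {1..N}" shows "bb k (n + 2^N) = bb k n"
proof -
  have "(2::nat)^k dvd 2^N" using assms by (simp add: le_imp_power_dvd)
  then have "(n + 2^N) mod 2^k = n mod 2^k" by (metis add.right_neutral dvd_imp_mod_0 mod_add_right_eq)
  then show ?thesis by (simp add: bb_def)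
qed

lemma bb_top1: "n < 2^N \<Longrightarrow> bb (Suc N) n"
  by (simp add: bb_def)

lemma bb_top2: "n < 2^N \<Longrightarrow> \<not> bb (Suc N) (n + 2^N)"
  by (simp add: bb_def)

lemma prod_sum:
  fixes g :: "nat \<Rightarrow> bool \<Rightarrow> real"
  shows "(\<Sum>n<2^N. \<Prod>k\<in>{1..N}. g k (bb k n)) = (\<Prod>k\<in>{1..N}. g k True + g k False)"
proof (induction N)
  case 0
  then show ?case by simp
next
  case (Suc N)
  let ?P = "\<lambda>n. \<Prod>k\<in>{1..N}. g k (bb k n)"
  have split: "{..<(2::nat)^Suc N} = {0..<2^N} \<union> {2^N..<2^N + 2^N}" by auto
  have "(\<Sum>n<2^Suc N. \<Prod>k\<in>{1..Suc N}. g k (bb k n))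
      = (\<Sum>n\<in>{0..<2^N}. \<Prod>k\<in>{1..Suc N}. g k (bb k n)) + (\<Sum>n\<in>{0+2^N..<2^N + 2^N}. \<Prod>k\<in>{1..Suc N}. g k (bb k n))"
    unfolding split by (subst sum.union_disjoint) auto
  also have "(\<Sum>n\<in>{0..<2^N}. \<Prod>k\<in>{1..Suc N}. g k (bb k n)) = (\<Sum>n\<in>{0..<2^N}. ?P n * g (Suc N) True)"
    by (rule sum.cong) (auto simp: prod.cl_ivl_Suc bb_top1)
  also have "(\<Sum>n\<in>{0+2^N..<2^N + 2^N}. \<Prod>k\<in>{1..Suc N}. g k (bb k n)) = (\<Sum>n\<in>{0..<2^N}. \<Prod>k\<in>{1..Suc N}. g k (bb k (n + 2^N)))"
    by (rule sum.shift_bounds_nat_ivl)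
  also have "\<dots> = (\<Sum>n\<in>{0..<2^N}. ?P n * g (Suc N) False)"
    by (rule sum.cong) (auto simp: prod.cl_ivl_Suc bb_top2 bb_shift intro!: prod.cong)
  finally have "(\<Sum>n<2^Suc N. \<Prod>k\<in>{1..Suc N}. g k (bb k n))
     = (\<Sum>n<2^N. ?P n * g (Suc N) True) + (\<Sum>n<2^N. ?P n * g (Suc N) False)"
    by (simp add: lessThan_atLeast0)
  also have "\<dots> = (\<Sum>n<2^N. ?P n) * g (Suc N) True + (\<Sum>n<2^N. ?P n) * g (Suc N) False"
    by (simp only: sum_distrib_right)
  finally show ?case using Suc.IH by (simp add: prod.cl_ivl_Suc distrib_left)
qed

definition prodq :: "nat \<Rightarrow> (nat \<Rightarrow> real) \<Rightarrow> nat \<Rightarrow> real" where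
  "prodq N x j = (if j \<in> {1..2^N} then \<Prod>k\<in>{1..N}. (if bitind k j then 1 - x k else x k) else 0)"

lemma sum_shift1: "(\<Sum>j\<in>{1..m}. f j) = (\<Sum>n<m. f (Suc n))"
proof -
  have "{1..m} = Suc ` {..<m}" by (auto simp: image_iff) (metis Suc_pred lessThan_iff less_Suc_eq_le not_gr0 not_less_eq_eq)
  then show ?thesis by (simp add: sum.reindex)
qed

lemma bitind_Suc: "bitind k (Suc n) = bb k n"
  by (simp add: bitind_def bb_def)

lemma prodq_sum:
  "(\<Sum>j\<in>{1..2^N}. prodq N x j) = 1"
proof -
  have "(\<Sum>j\<in>{1..2^N}. prodq N x j) = (\<Sum>n<2^N. \<Prod>k\<in>{1..N}. (\<lambda>k c. if c then 1 - x k else x k) k (bb k n))"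
    unfolding sum_shift1 by (simp add: prodq_def bitind_Suc del: One_nat_def)
  also have "\<dots> = 1" by (subst prod_sum) simp
  finally show ?thesis .
qed

lemma prodq_simplex:
  assumes "\<forall>k\<in>{1..N}. 0 \<le> x k \<and> x k \<le> 1"
  shows "prodq N x \<in> probsimplex (2^N)"
  unfolding probsimplex_def using prodq_sum[of N x] assms
  by (auto simp: prodq_def intro!: prod_nonneg)

lemma sigvec1: "sigvec M bandH i q 1 = (\<Sum>j\<in>{1..M}. if bitind i j then 0 else q j)"
  unfolding sigvec_def by (subst sum.inter_filter) (auto simp: bandH_def intro!: sum.cong)

lemma sigvec2: "sigvec M bandH i q 2 = (\<Sum>j\<in>{1..M}. if bitind i j then q j else 0)"
  unfolding sigvec_def by (subst sum.inter_filter) (auto simp: bandH_def intro!: sum.cong)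

lemma sigvec12: "q \<in> probsimplex M \<Longrightarrow> sigvec M bandH i q 2 = 1 - sigvec M bandH i q 1"
proof -
  assume "q \<in> probsimplex M"
  then have s: "(\<Sum>j\<in>{1..M}. q j) = 1" by (simp add: probsimplex_def)
  have "(\<Sum>j\<in>{1..M}. if bitind i j then q j else 0) + (\<Sum>j\<in>{1..M}. if bitind i j then 0 else q j) = (\<Sum>j\<in>{1..M}. q j)"
    by (subst sum.distrib[symmetric]) (auto intro!: sum.cong)
  then show ?thesis unfolding sigvec1 sigvec2 using s by linarith
qed

lemma prodq_marg:
  assumes "i \<in> {1..N}"
  shows "sigvec (2^N) bandH i (prodq N x) 1 = x i"
proof -
  let ?g = "\<lambda>k c. if k = i \<and> c then 0 else if c then 1 - x k else x k"
  have "sigvec (2^N) bandH i (prodq N x) 1 = (\<Sum>n<2^N. if bb i n then 0 else \<Prod>k\<in>{1..N}. (if bb k n then 1 - x k else x k))"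
    unfolding sigvec1 sum_shift1 by (intro sum.cong) (auto simp: prodq_def bitind_Suc Suc_le_eq)
  also have "\<dots> = (\<Sum>n<2^N. \<Prod>k\<in>{1..N}. ?g k (bb k n))"
  proof (rule sum.cong)
    fix n :: nat assume "n \<in> {..<2^N}"
    show "(if bb i n then 0 else \<Prod>k\<in>{1..N}. (if bb k n then 1 - x k else x k)) = (\<Prod>k\<in>{1..N}. ?g k (bb k n))"
    proof (cases "bb i n")
      case True
      then show ?thesis using assms by (subst prod_zero) auto
    next
      case False
      then show ?thesis by (auto intro!: prod.cong)
    qed
  qed simp
  also have "\<dots> = (\<Prod>k\<in>{1..N}. ?g k True + ?g k False)" by (rule prod_sum)
  also have "\<dots> = (\<Prod>k\<in>{1..N}. if k = i then x k else 1)" by (rule prod.cong) auto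
  also have "\<dots> = x i" using assms by (subst prod.delta) auto
  finally show ?thesis .
qed

lemma bandp_eq: "bandp N \<mu> = prodq N \<mu>"
  by (rule ext) (auto simp: bandp_def prodq_def algebra_simps intro!: prod.cong)

lemma ln_strict: "0 < (x::real) \<Longrightarrow> x \<noteq> 1 \<Longrightarrow> ln x < x - 1"
  using ln_le_minus_one[of x] ln_eq_minus_one[of x] by fastforce

lemma bern_kl_nonneg:
  assumes "0 < a" "a < 1" "0 < b" "b < 1"
  shows "0 \<le> bern_kl a b" and "a \<noteq> b \<Longrightarrow> 0 < bern_kl a b"
proof -
  have e1: "a * ln (a / b) = - (a * ln (b / a))" using assms by (simp add: ln_div algebra_simps)
  have e2: "(1 - a) * ln ((1 - a) / (1 - b)) = - ((1 - a) * ln ((1 - b) / (1 - a)))" using assms by (simp add: ln_div algebra_simps)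
  have l1: "ln (b / a) \<le> b / a - 1" using assms by (intro ln_le_minus_one) simp
  have l2: "ln ((1 - b) / (1 - a)) \<le> (1 - b) / (1 - a) - 1" using assms by (intro ln_le_minus_one) simp
  have m1: "a * ln (b / a) \<le> a * (b / a - 1)" using l1 assms by (intro mult_left_mono) auto
  have m2: "(1 - a) * ln ((1 - b) / (1 - a)) \<le> (1 - a) * ((1 - b) / (1 - a) - 1)" using l2 assms by (intro mult_left_mono) auto
  have s1: "a * (b / a - 1) = b - a" using assms by (simp add: field_simps)
  have s2: "(1 - a) * ((1 - b) / (1 - a) - 1) = a - b" using assms by (simp add: field_simps)
  show "0 \<le> bern_kl a b" unfolding bern_kl_def e1 e2 using m1 m2 s1 s2 by linarith
  assume "a \<noteq> b"
  then have "b / a \<noteq> 1" using assms by auto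
  then have l1': "ln (b / a) < b / a - 1" using assms by (intro ln_strict) auto
  have m1': "a * ln (b / a) < a * (b / a - 1)" using l1' assms by (intro mult_strict_left_mono) auto
  show "0 < bern_kl a b" unfolding bern_kl_def e1 e2 using m1' m2 s1 s2 by linarith
qed

lemma bern_kl_self: "bern_kl a a = 0"
  by (cases "a = 0"; cases "a = 1") (auto simp: bern_kl_def)

lemma bern_kl_mono:
  assumes "0 < p" "p \<le> b" "b \<le> a" "a < 1"
  shows "bern_kl p b \<le> bern_kl p a"
proof -
  have pos: "0 < b" "0 < a" "0 < 1 - a" "0 < 1 - b" "0 < 1 - p" using assms by auto
  define u where "u = ln b - ln a"
  define v where "v = ln (1 - b) - ln (1 - a)"
  have u: "u \<le> 0" using pos assms by (simp add: u_def)
  have v: "0 \<le> v" using pos assms by (simp add: v_def)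
  have d: "bern_kl p a - bern_kl p b = p * u + (1 - p) * v"
    using pos assms by (simp add: bern_kl_def ln_div u_def v_def algebra_simps)
  have d2: "bern_kl b a = b * u + (1 - b) * v"
  proof -
    have "bern_kl b a - bern_kl b b = b * u + (1 - b) * v"
      using pos assms by (simp add: bern_kl_def ln_div u_def v_def algebra_simps)
    then show ?thesis by (simp add: bern_kl_self)
  qed
  have "0 \<le> bern_kl b a"
  proof (cases "b < 1")
    case True then show ?thesis using bern_kl_nonneg(1)[of b a] pos assms by auto
  next
    case False then show ?thesis using assms by auto
  qed
  moreover have "(p - b) * (u - v) \<ge> 0" using u v assms by (intro mult_nonpos_nonpos) auto
  ultimately have "0 \<le> p * u + (1 - p) * v" using d2 by (simp add: algebra_simps)
  then show ?thesis using d by simp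
qed

lemma KL_eval:
  assumes "p 1 = a" "p 2 = 1 - a" "q 1 = b" "q 2 = 1 - b" "0 < a" "a < 1" "0 < b" "b < 1"
  shows "KL 2 p q = ereal (bern_kl a b)"
  using assms by (simp add: KL_def numeral_2_eq_2 bern_kl_def)

lemma KL_inf:
  assumes "p 1 = a" "p 2 = 1 - a" "q 1 = b" "q 2 = 1 - b" "0 < a" "a < 1" "b = 0 \<or> b = 1"
  shows "KL 2 p q = \<infinity>"
  using assms by (auto simp: KL_def numeral_2_eq_2)

lemma KL_cong: "q' 1 = q 1 \<Longrightarrow> q' 2 = q 2 \<Longrightarrow> KL 2 p q' = KL 2 p q"
  by (simp add: KL_def numeral_2_eq_2)

lemma lossdiff_eq:
  assumes "q \<in> probsimplex M"
  shows "lossdiff M bandL a b q = sigvec M bandH b q 1 - sigvec M bandH a q 1"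
proof -
  have "lossdiff M bandL a b q = sigvec M bandH a q 2 - sigvec M bandH b q 2"
    unfolding lossdiff_def sigvec2 by (subst sum_subtractf[symmetric]) (auto simp: bandL_def intro!: sum.cong)
  then show ?thesis using sigvec12[OF assms] by simp
qed

lemma sigvec_nonneg: "q \<in> probsimplex M \<Longrightarrow> 0 \<le> sigvec M H i q k"
  unfolding sigvec_def probsimplex_def by (auto intro!: sum_nonneg)

lemma sigvec_le1: "q \<in> probsimplex M \<Longrightarrow> sigvec M bandH i q 1 \<le> 1"
  using sigvec12[of q M i] sigvec_nonneg[of q M bandH i 2] by simp

lemma cont_sigvec: "continuous_on UNIV (\<lambda>q. sigvec M H i q k)"
  unfolding sigvec_def by (intro continuous_on_sum) auto

lemma cellc_iff:
  "q \<in> cellc N M bandL 1 \<longleftrightarrow> q \<in> probsimplex M \<and> (\<exists>i\<in>{1..N} - {1}. sigvec M bandH 1 q 1 < sigvec M bandH i q 1)"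
proof -
  have "q \<in> cell N M bandL 1 \<longleftrightarrow> q \<in> probsimplex M \<and> (\<forall>i\<in>{1..N} - {1}. sigvec M bandH i q 1 \<le> sigvec M bandH 1 q 1)"
    unfolding cell_def using lossdiff_eq[of q M 1] by auto
  then show ?thesis unfolding cellc_def by (auto simp: not_le simp del: One_nat_def)
qed

lemma cellc_open:
  "cellc N M bandL 1 = probsimplex M \<inter> (\<Union>i\<in>{1..N} - {1}. {q. sigvec M bandH 1 q 1 < sigvec M bandH i q 1})"
  "open (\<Union>i\<in>{1..N} - {1}. {q. sigvec M bandH 1 q 1 < sigvec M bandH i q 1})"
   apply (rule set_eqI) apply (simp only: cellc_iff Int_iff UN_iff mem_Collect_eq)
  by (auto intro!: open_Collect_less cont_sigvec simp del: One_nat_def)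

lemma intP_cellc: "intP M (cellc N M bandL 1) = cellc N M bandL 1"
  unfolding intP_def by (rule interior_of_openin) (simp only: cellc_open(1) openin_open_Int cellc_open(2))

lemma clP_eq: "clP M X = probsimplex M \<inter> closure (probsimplex M \<inter> X)"
  unfolding clP_def by (simp add: closure_of_subtopology)

lemma clP_cellc_sub:
  assumes "q \<in> clP M (cellc N M bandL 1)"
  shows "q \<in> probsimplex M \<and> (\<exists>i\<in>{1..N} - {1}. sigvec M bandH 1 q 1 \<le> sigvec M bandH i q 1)"
proof -
  let ?K = "\<Union>i\<in>{1..N} - {1}. {q. sigvec M bandH 1 q 1 \<le> sigvec M bandH i q 1}"
  have cK: "closed ?K" by (intro closed_UN) (auto intro!: closed_Collect_le cont_sigvec)
  have "probsimplex M \<inter> cellc N M bandL 1 \<subseteq> ?K"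
  proof
    fix x assume "x \<in> probsimplex M \<inter> cellc N M bandL 1"
    then obtain i where "i \<in> {1..N} - {1}" "sigvec M bandH 1 x 1 < sigvec M bandH i x 1"
      using cellc_iff[of x N M] by blast
    then show "x \<in> ?K" by (intro UN_I[of i]) auto
  qed
  then have "closure (probsimplex M \<inter> cellc N M bandL 1) \<subseteq> ?K" using cK by (rule closure_minimal)
  then show ?thesis using assms unfolding clP_eq by auto
qed

lemma approx:
  assumes q: "q \<in> probsimplex (2^N)" and i: "i \<in> {1..N} - {1}"
    and le: "sigvec (2^N) bandH 1 q 1 \<le> sigvec (2^N) bandH i q 1"
    and lt: "sigvec (2^N) bandH 1 q 1 < 1"
  shows "q \<in> clP (2^N) {q' \<in> cellc N (2^N) bandL 1. sigvec (2^N) bandH 1 q' 1 = sigvec (2^N) bandH 1 q 1}"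
proof -
  let ?M = "(2::nat)^N"
  let ?m = "\<lambda>k q. sigvec ?M bandH k q 1"
  let ?X = "{q' \<in> cellc N ?M bandL 1. ?m 1 q' = ?m 1 q}"
  define w where "w = prodq N (\<lambda>k. if k = 1 then ?m 1 q else 1)"
  have N1: "1 \<in> {1..N}" using i by auto
  have w: "w \<in> probsimplex ?M" unfolding w_def
    using sigvec_nonneg[OF q] sigvec_le1[OF q] by (intro prodq_simplex) auto
  have w1: "?m 1 w = ?m 1 q" unfolding w_def using N1 by (subst prodq_marg) auto
  have wi: "?m i w = 1" unfolding w_def using i by (subst prodq_marg) auto
  define f where "f = (\<lambda>t::real. \<lambda>j. (1 - t) * q j + t * w j)"
  have lin: "?m k (f t) = (1 - t) * ?m k q + t * ?m k w" for k t
    unfolding f_def sigvec_def by (simp add: sum.distrib sum_distrib_left)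
  have fS: "f t \<in> probsimplex ?M" if "0 \<le> t" "t \<le> 1" for t
  proof -
    have "(\<Sum>j\<in>{1..?M}. f t j) = (1 - t) * (\<Sum>j\<in>{1..?M}. q j) + t * (\<Sum>j\<in>{1..?M}. w j)"
      unfolding f_def by (simp add: sum.distrib sum_distrib_left)
    then show ?thesis using q w that unfolding probsimplex_def f_def by auto
  qed
  have fX: "f ` {0<..1} \<subseteq> ?X"
  proof
    fix y assume "y \<in> f ` {0<..1}"
    then obtain t where t: "0 < t" "t \<le> 1" "y = f t" by auto
    have e1: "?m 1 y = ?m 1 q" using lin[of 1 t] w1 t by (simp add: algebra_simps)
    have "?m i y = (1 - t) * ?m i q + t" using lin[of i t] wi t by simp
    also have "\<dots> > ?m 1 q"
    proof -
      have "(1 - t) * ?m 1 q \<le> (1 - t) * ?m i q" using le t by (intro mult_left_mono) auto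
      moreover have "t * ?m 1 q < t" using lt t by simp
      ultimately show ?thesis by (simp add: algebra_simps)
    qed
    finally have "?m 1 q < ?m i y" .
    then have "\<exists>i\<in>{1..N} - {1}. ?m 1 y < ?m i y" using e1 i by (intro bexI[of _ i]) auto
    moreover have "y \<in> probsimplex ?M" using fS[of t] t by auto
    ultimately have "y \<in> cellc N ?M bandL 1" using cellc_iff[of y N ?M] by blast
    then show "y \<in> ?X" using e1 by auto
  qed
  have cf: "continuous_on (closure {0<..1}) f"
    unfolding f_def by (intro continuous_on_coordinatewise_then_product continuous_intros)
  have "f ` closure {0<..1} \<subseteq> closure ?X"
    using fX by (intro image_closure_subset[OF cf]) (auto intro: closure_subset[THEN subsetD])
  moreover have "f 0 = q" unfolding f_def by simp
  ultimately have "q \<in> closure ?X" by force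
  moreover have "probsimplex ?M \<inter> ?X = ?X" by (auto simp: cellc_def)
  ultimately show ?thesis using q unfolding clP_eq by auto
qed

lemma clP_mono: "X \<subseteq> Y \<Longrightarrow> clP M X \<subseteq> clP M Y"
  unfolding clP_def by (rule closure_of_mono)

lemma clP_clP: "clP M (clP M X) = clP M X"
  unfolding clP_def by simp

lemma clP_sup: "X \<subseteq> probsimplex M \<Longrightarrow> X \<subseteq> clP M X"
  unfolding clP_def by (rule closure_of_subset) simp

theorem corollary4:
  fixes N :: nat and \<mu> :: "nat \<Rightarrow> real"
  assumes "N \<ge> 2"
    and "\<forall>i\<in>{1..N}. 0 < \<mu> i \<and> \<mu> i < 1"
    and "\<forall>i\<in>{1..N}. \<forall>i'\<in>{1..N}. i < i' \<longrightarrow> \<mu> i' < \<mu> i"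
  shows "(\<exists>r. Rstar N (2 ^ N) 2 bandL bandH 1 (bandp N \<mu>)
                 (\<lambda>i. sigvec (2 ^ N) bandH i (bandp N \<mu>)) (\<lambda>i. 0) = {r})
    \<and> (\<exists>\<epsilon>>0. \<forall>\<delta>. 0 \<le> \<delta> \<and> \<delta> < \<epsilon> \<longrightarrow>
         (let S\<delta> = {q \<in> probsimplex (2 ^ N).
                     KL 2 (sigvec (2 ^ N) bandH 1 (bandp N \<mu>)) (sigvec (2 ^ N) bandH 1 q) \<le> ereal \<delta>}
          in clP (2 ^ N) (intP (2 ^ N) (cellc N (2 ^ N) bandL 1) \<inter> S\<delta>)
             = clP (2 ^ N) (clP (2 ^ N) (cellc N (2 ^ N) bandL 1) \<inter> S\<delta>)))
    \<and> Cval N (2 ^ N) 2 bandL bandH 1 (bandp N \<mu>)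
          (\<lambda>i. sigvec (2 ^ N) bandH i (bandp N \<mu>)) (\<lambda>i. 0)
        = ereal (\<Sum>i\<in>{1..N} - {1}. lossdiff (2 ^ N) bandL i 1 (bandp N \<mu>) / bern_kl (\<mu> i) (\<mu> 1))"
proof -
  let ?M = "(2::nat)^N"
  let ?m = "\<lambda>k q. sigvec ?M bandH k q 1"
  let ?I = "{1..N} - {1::nat}"
  let ?p = "bandp N \<mu>"
  let ?P = "\<lambda>i. sigvec ?M bandH i ?p"
  let ?C = "cellc N ?M bandL 1"
  have mu: "0 < \<mu> i \<and> \<mu> i < 1" if "i \<in> {1..N}" for i using assms(2) that by auto
  have N1: "1 \<in> {1..N}" using assms(1) by auto
  have muI: "\<mu> i < \<mu> 1" if "i \<in> ?I" for i using assms(3) N1 that by auto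
  have pS: "?p \<in> probsimplex ?M" unfolding bandp_eq using mu by (intro prodq_simplex) (auto simp: less_imp_le)
  have P1: "?P i 1 = \<mu> i" if "i \<in> {1..N}" for i unfolding bandp_eq using that by (rule prodq_marg)
  have P2: "?P i 2 = 1 - \<mu> i" if "i \<in> {1..N}" for i using sigvec12[OF pS, of i] P1[OF that] by simp
  define d where "d i = bern_kl (\<mu> i) (\<mu> 1)" for i
  have dpos: "0 < d i" if "i \<in> ?I" for i
    unfolding d_def using mu[of i] mu[OF N1] muI[OF that] that by (intro bern_kl_nonneg(2)) auto
  define \<Delta> where "\<Delta> i = lossdiff ?M bandL i 1 ?p" for i
  have \<Delta>: "\<Delta> i = \<mu> 1 - \<mu> i" if "i \<in> ?I" for i
    unfolding \<Delta>_def using lossdiff_eq[OF pS] P1 N1 that by auto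
  have \<Delta>pos: "0 < \<Delta> i" if "i \<in> ?I" for i using \<Delta>[OF that] muI[OF that] by simp

  have KLm: "0 < ?m 1 q \<and> ?m 1 q < 1"
    if q: "q \<in> probsimplex ?M" and K: "KL 2 (?P 1) (sigvec ?M bandH 1 q) \<le> ereal \<delta>" for q \<delta>
  proof (rule ccontr)
    assume "\<not> (0 < ?m 1 q \<and> ?m 1 q < 1)"
    then have "?m 1 q = 0 \<or> ?m 1 q = 1" using sigvec_nonneg[OF q, of bandH 1 1] sigvec_le1[OF q, of 1] by linarith
    then have "KL 2 (?P 1) (sigvec ?M bandH 1 q) = \<infinity>"
      using P1[OF N1] P2[OF N1] mu[OF N1] sigvec12[OF q, of 1]
      by (intro KL_inf[where a = "\<mu> 1" and b = "?m 1 q"]) auto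
    then show False using K by simp
  qed

  define Q where "Q = {q \<in> clP ?M ?C. KL 2 (?P 1) (sigvec ?M bandH 1 q) \<le> ereal 0}"
  have Qm: "q \<in> probsimplex ?M \<and> ?m 1 q = \<mu> 1 \<and> (\<exists>i\<in>?I. \<mu> 1 \<le> ?m i q)" if "q \<in> Q" for q
  proof -
    have c: "q \<in> clP ?M ?C" and K: "KL 2 (?P 1) (sigvec ?M bandH 1 q) \<le> ereal 0" using that Q_def by auto
    from clP_cellc_sub[OF c] obtain i where q: "q \<in> probsimplex ?M" and i: "i \<in> ?I" "?m 1 q \<le> ?m i q" by blast
    have m: "0 < ?m 1 q \<and> ?m 1 q < 1" using KLm[OF q K] .
    have "KL 2 (?P 1) (sigvec ?M bandH 1 q) = ereal (bern_kl (\<mu> 1) (?m 1 q))"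
      using P1[OF N1] P2[OF N1] mu[OF N1] sigvec12[OF q, of 1] m by (intro KL_eval) auto
    then have "bern_kl (\<mu> 1) (?m 1 q) \<le> 0" using K by simp
    then have "?m 1 q = \<mu> 1" using bern_kl_nonneg(2)[of "\<mu> 1" "?m 1 q"] mu[OF N1] m by force
    then show ?thesis using q i by auto
  qed

  define T where "T r q = (\<Sum>i\<in>?I. ereal (r i) * max (KL 2 (?P i) (sigvec ?M bandH i q)) 0)" for r q
  define R where "R = {r. (\<forall>i. 0 \<le> r i) \<and> (\<forall>i. i \<notin> ?I \<longrightarrow> r i = 0) \<and> (\<forall>i\<in>?I. 1 \<le> r i * d i)}"
  have Rset0: "Rset N ?M 2 bandL bandH 1 ?P (\<lambda>i. 0) =
     {r. (\<forall>i. 0 \<le> r i) \<and> (\<forall>i. i \<notin> ?I \<longrightarrow> r i = 0) \<and> 1 \<le> (INF q\<in>Q. T r q)}"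
    unfolding Rset_def Q_def T_def by (simp add: zero_ereal_def[symmetric])
  have key: "1 \<le> (INF q\<in>Q. T r q) \<longleftrightarrow> (\<forall>i\<in>?I. 1 \<le> r i * d i)"
    if r0: "\<forall>i. 0 \<le> r i" for r
  proof
    assume H: "1 \<le> (INF q\<in>Q. T r q)"
    show "\<forall>i\<in>?I. 1 \<le> r i * d i"
    proof
      fix i assume i: "i \<in> ?I"
      define x where "x k = (if k = i then \<mu> 1 else \<mu> k)" for k
      define q where "q = prodq N x"
      have x01: "\<forall>k\<in>{1..N}. 0 \<le> x k \<and> x k \<le> 1" using mu N1 by (auto simp: x_def less_imp_le)
      have q: "q \<in> probsimplex ?M" unfolding q_def by (rule prodq_simplex[OF x01])
      have mq: "?m k q = x k" if "k \<in> {1..N}" for k unfolding q_def using that by (rule prodq_marg)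
      have mq1: "?m 1 q = \<mu> 1" using mq[OF N1] i by (simp add: x_def)
      have mqi: "?m i q = \<mu> 1" using mq[of i] i by (simp add: x_def)
      have qC: "q \<in> clP ?M ?C"
      proof -
        have "q \<in> clP ?M {q' \<in> ?C. ?m 1 q' = ?m 1 q}"
          using mq1 mqi mu[OF N1] i by (intro approx[OF q i]) auto
        then show ?thesis using clP_mono[of "{q' \<in> ?C. ?m 1 q' = ?m 1 q}" ?C] by blast
      qed
      have KLk: "KL 2 (?P k) (sigvec ?M bandH k q) = ereal (bern_kl (\<mu> k) (x k))" if k: "k \<in> {1..N}" for k
        using P1[OF k] P2[OF k] mu[OF k] mu[OF N1] sigvec12[OF q, of k] mq[OF k] k
        by (intro KL_eval) (auto simp: x_def)
      have "q \<in> Q" unfolding Q_def using qC KLk[OF N1] i by (simp add: x_def bern_kl_self)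
      have "T r q = (\<Sum>k\<in>?I. if k = i then ereal (r i * d i) else 0)"
        unfolding T_def
      proof (rule sum.cong)
        fix k assume k: "k \<in> ?I"
        show "ereal (r k) * max (KL 2 (?P k) (sigvec ?M bandH k q)) 0 = (if k = i then ereal (r i * d i) else 0)"
          using KLk[of k] k dpos[OF i] by (auto simp: x_def d_def bern_kl_self max_def)
      qed simp
      also have "\<dots> = ereal (r i * d i)" using i by simp
      finally have "T r q = ereal (r i * d i)" .
      moreover have "(INF q\<in>Q. T r q) \<le> T r q" using \<open>q \<in> Q\<close> by (rule INF_lower)
      ultimately show "1 \<le> r i * d i" using H by (metis dual_order.trans ereal_less_eq(3) one_ereal_def)
    qed
  next
    assume H: "\<forall>i\<in>?I. 1 \<le> r i * d i"
    show "1 \<le> (INF q\<in>Q. T r q)"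
    proof (rule INF_greatest)
      fix q assume "q \<in> Q"
      from Qm[OF this] obtain i where q: "q \<in> probsimplex ?M" and m1: "?m 1 q = \<mu> 1"
        and i: "i \<in> ?I" and mi: "\<mu> 1 \<le> ?m i q" by blast
      have iN: "i \<in> {1..N}" using i by auto
      have rpos: "0 < r i" using H i dpos[OF i] r0
        by (metis less_eq_real_def mult_zero_left not_one_le_zero)
      have ti: "1 \<le> ereal (r i) * max (KL 2 (?P i) (sigvec ?M bandH i q)) 0"
      proof (cases "?m i q = 1")
        case True
        have "KL 2 (?P i) (sigvec ?M bandH i q) = \<infinity>"
          using P1[OF iN] P2[OF iN] mu[OF iN] sigvec12[OF q, of i] True
          by (intro KL_inf[where a = "\<mu> i" and b = "?m i q"]) auto
        then show ?thesis using rpos by simp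
      next
        case False
        then have lt: "?m i q < 1" using sigvec_le1[OF q] by (simp add: less_le)
        have pos: "0 < ?m i q" using mi mu[OF N1] by linarith
        have K: "KL 2 (?P i) (sigvec ?M bandH i q) = ereal (bern_kl (\<mu> i) (?m i q))"
          using P1[OF iN] P2[OF iN] mu[OF iN] sigvec12[OF q, of i] lt pos by (intro KL_eval) auto
        have "d i \<le> bern_kl (\<mu> i) (?m i q)"
          unfolding d_def using mu[OF iN] muI[OF i] mi lt by (intro bern_kl_mono) auto
        then have "r i * d i \<le> r i * bern_kl (\<mu> i) (?m i q)" using r0 by (intro mult_left_mono) auto
        moreover have "1 \<le> r i * d i" using H i by blast
        ultimately have "1 \<le> r i * bern_kl (\<mu> i) (?m i q)" by linarith
        moreover have "0 \<le> bern_kl (\<mu> i) (?m i q)" using \<open>d i \<le> _\<close> dpos[OF i] by linarith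
        moreover have "bern_kl (\<mu> i) (?m i q) \<noteq> 0" using calculation(1) by (metis mult_zero_right not_one_le_zero)
        ultimately show ?thesis using K by (simp add: max_def)
      qed
      have nn: "0 \<le> ereal (r k) * max (KL 2 (?P k) (sigvec ?M bandH k q)) 0" for k
        using r0 by (simp add: ereal_zero_le_0_iff)
      have Teq: "T r q = ereal (r i) * max (KL 2 (?P i) (sigvec ?M bandH i q)) 0
          + (\<Sum>k\<in>?I - {i}. ereal (r k) * max (KL 2 (?P k) (sigvec ?M bandH k q)) 0)"
        unfolding T_def using i by (subst sum.remove) auto
      have S0: "0 \<le> (\<Sum>k\<in>?I - {i}. ereal (r k) * max (KL 2 (?P k) (sigvec ?M bandH k q)) 0)"
        using nn by (intro sum_nonneg) auto
      show "1 \<le> T r q" unfolding Teq by (rule add_increasing2[OF S0 ti])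
    qed
  qed
  have Rset_eq: "Rset N ?M 2 bandL bandH 1 ?P (\<lambda>i. 0) = R"
    unfolding Rset0 R_def using key by blast

  define rs where "rs i = (if i \<in> ?I then 1 / d i else 0)" for i
  have dpos': "\<forall>i\<in>?I. 0 < d i" using dpos by blast
  have rsR: "rs \<in> R" unfolding R_def rs_def
  proof (intro CollectI conjI allI ballI impI)
    fix i show "0 \<le> (if i \<in> ?I then 1 / d i else 0)" using dpos' by (auto simp: less_imp_le)
  next
    fix i assume i: "i \<in> ?I" then show "1 \<le> (if i \<in> ?I then 1 / d i else 0) * d i" using dpos[OF i] by auto
  qed auto
  have rs_pt: "rs i * \<Delta> i \<le> r i * \<Delta> i" if "r \<in> R" and i: "i \<in> ?I" for r i
  proof -
    have "1 \<le> r i * d i" using that i unfolding R_def by auto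
    then have "1 / d i \<le> r i" using dpos[OF i] by (simp add: divide_le_eq)
    then show "rs i * \<Delta> i \<le> r i * \<Delta> i" using i \<Delta>pos[OF i] by (intro mult_right_mono) (auto simp: rs_def)
  qed
  have rs_le: "(\<Sum>i\<in>?I. rs i * \<Delta> i) \<le> (\<Sum>i\<in>?I. r i * \<Delta> i)" if "r \<in> R" for r
    using rs_pt[OF that] by (intro sum_mono) auto
  have Cv: "Cval N ?M 2 bandL bandH 1 ?p ?P (\<lambda>i. 0) = ereal (\<Sum>i\<in>?I. rs i * \<Delta> i)"
    unfolding Cval_def Rset_eq \<Delta>_def[symmetric]
  proof (rule antisym)
    show "(INF r\<in>R. ereal (\<Sum>i\<in>?I. r i * \<Delta> i)) \<le> ereal (\<Sum>i\<in>?I. rs i * \<Delta> i)"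
      using rsR by (rule INF_lower)
    show "ereal (\<Sum>i\<in>?I. rs i * \<Delta> i) \<le> (INF r\<in>R. ereal (\<Sum>i\<in>?I. r i * \<Delta> i))"
      using rs_le by (intro INF_greatest) simp
  qed
  have part1: "Rstar N ?M 2 bandL bandH 1 ?p ?P (\<lambda>i. 0) = {rs}"
  proof
    show "{rs} \<subseteq> Rstar N ?M 2 bandL bandH 1 ?p ?P (\<lambda>i. 0)"
      unfolding Rstar_def Rset_eq Cv \<Delta>_def[symmetric] using rsR by simp
    show "Rstar N ?M 2 bandL bandH 1 ?p ?P (\<lambda>i. 0) \<subseteq> {rs}"
    proof
      fix r assume "r \<in> Rstar N ?M 2 bandL bandH 1 ?p ?P (\<lambda>i. 0)"
      then have rR: "r \<in> R" and eq: "(\<Sum>i\<in>?I. r i * \<Delta> i) = (\<Sum>i\<in>?I. rs i * \<Delta> i)"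
        unfolding Rstar_def Rset_eq Cv \<Delta>_def[symmetric] by auto
      show "r \<in> {rs}"
      proof (rule ccontr)
        assume "r \<notin> {rs}"
        then obtain i where ne: "r i \<noteq> rs i" by auto
        have i: "i \<in> ?I" using ne rR unfolding R_def rs_def by (auto split: if_splits)
        have "1 \<le> r i * d i" using rR i unfolding R_def by auto
        then have "1 / d i \<le> r i" using dpos[OF i] by (simp add: divide_le_eq)
        then have "rs i < r i" using ne i by (auto simp: rs_def)
        then have "rs i * \<Delta> i < r i * \<Delta> i" using \<Delta>pos[OF i] by simp
        then have "(\<Sum>i\<in>?I. rs i * \<Delta> i) < (\<Sum>i\<in>?I. r i * \<Delta> i)"
          using rs_pt[OF rR] i by (intro sum_strict_mono_ex1) auto
        then show False using eq by simp
      qed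
    qed
  qed
  have part3: "Cval N ?M 2 bandL bandH 1 ?p ?P (\<lambda>i. 0)
      = ereal (\<Sum>i\<in>?I. lossdiff ?M bandL i 1 ?p / bern_kl (\<mu> i) (\<mu> 1))"
    unfolding Cv by (auto simp: rs_def \<Delta>_def d_def intro!: sum.cong)
  have part2: "clP ?M (intP ?M ?C \<inter> S) = clP ?M (clP ?M ?C \<inter> S)"
    if "S = {q \<in> probsimplex ?M. KL 2 (?P 1) (sigvec ?M bandH 1 q) \<le> ereal \<delta>}" for S \<delta>
  proof
    have CS: "?C \<subseteq> probsimplex ?M" by (auto simp: cellc_def)
    show "clP ?M (intP ?M ?C \<inter> S) \<subseteq> clP ?M (clP ?M ?C \<inter> S)"
      unfolding intP_cellc using clP_sup[OF CS] by (intro clP_mono) auto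
    have "clP ?M ?C \<inter> S \<subseteq> clP ?M (?C \<inter> S)"
    proof
      fix q assume qq: "q \<in> clP ?M ?C \<inter> S"
      from clP_cellc_sub[of q ?M N] qq obtain i where q: "q \<in> probsimplex ?M" and i: "i \<in> ?I"
        and le: "?m 1 q \<le> ?m i q" by blast
      have K: "KL 2 (?P 1) (sigvec ?M bandH 1 q) \<le> ereal \<delta>" using qq that by auto
      have "?m 1 q < 1" using KLm[OF q K] by simp
      then have "q \<in> clP ?M {q' \<in> ?C. ?m 1 q' = ?m 1 q}" by (rule approx[OF q i le])
      moreover have "{q' \<in> ?C. ?m 1 q' = ?m 1 q} \<subseteq> ?C \<inter> S"
      proof
        fix q' assume q': "q' \<in> {q' \<in> ?C. ?m 1 q' = ?m 1 q}"
        then have q'S: "q' \<in> probsimplex ?M" by (auto simp: cellc_def)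
        have "KL 2 (?P 1) (sigvec ?M bandH 1 q') = KL 2 (?P 1) (sigvec ?M bandH 1 q)"
          using q' sigvec12[OF q'S, of 1] sigvec12[OF q, of 1] by (intro KL_cong) auto
        then show "q' \<in> ?C \<inter> S" using q' q'S K that by auto
      qed
      ultimately show "q \<in> clP ?M (?C \<inter> S)" using clP_mono by blast
    qed
    then have "clP ?M (clP ?M ?C \<inter> S) \<subseteq> clP ?M (clP ?M (?C \<inter> S))" by (rule clP_mono)
    then show "clP ?M (clP ?M ?C \<inter> S) \<subseteq> clP ?M (intP ?M ?C \<inter> S)"
      unfolding intP_cellc clP_clP .
  qed
  show ?thesis
    using part1 part3 part2 by (auto simp: Let_def intro!: exI[of _ 1])
qed

end
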